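(* For every $m\ge1$, the unipotent conjugacy classes of type $(3)$ in $\mathbf{PSL}_3(2^{2m})$ are of type D.
   Context: Type $(3)$ means a single Jordan block of size 3 (regular unipotent). Conjugacy classes are racks with $x\triangleright y=xyx^{-1}$. A subrack $Y$ is decomposable if $Y=R\sqcup S$ with nonempty subracks $R,S$, $Y\triangleright R=R$, $Y\triangleright S=S$. Type D: a decomposable subrack $R\sqcup S$ with $r\in R,s\in S$ and $r\triangleright(s\triangleright(r\triangleright s))\neq s$. *)

theory Defs
  imports "HOL-Analysis.Analysis"
begin

text \<open>A rack is given by a carrier set X and an operation op (x triangleright y = op x y).
  A subrack of X is a subset closed under the operation.\<close>

definition subrack :: "('b \<Rightarrow> 'b \<Rightarrow> 'b) \<Rightarrow> 'b set \<Rightarrow> 'b set \<Rightarrow> bool" where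
  "subrack op X Y \<longleftrightarrow> Y \<subseteq> X \<and> (\<forall>x\<in>Y. \<forall>y\<in>Y. op x y \<in> Y)"

definition decomposition :: "('b \<Rightarrow> 'b \<Rightarrow> 'b) \<Rightarrow> 'b set \<Rightarrow> 'b set \<Rightarrow> 'b set \<Rightarrow> 'b set \<Rightarrow> bool" where
  "decomposition op X Y R S \<longleftrightarrow>
     subrack op X Y \<and> subrack op X R \<and> subrack op X S \<and>
     R \<noteq> {} \<and> S \<noteq> {} \<and> R \<inter> S = {} \<and> Y = R \<union> S \<and>
     {op y r | y r. y \<in> Y \<and> r \<in> R} = R \<and>
     {op y s | y s. y \<in> Y \<and> s \<in> S} = S"

definition type_D :: "('b \<Rightarrow> 'b \<Rightarrow> 'b) \<Rightarrow> 'b set \<Rightarrow> bool" where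
  "type_D op X \<longleftrightarrow>
     (\<exists>Y R S r s. decomposition op X Y R S \<and> r \<in> R \<and> s \<in> S \<and>
        op r (op s (op r s)) \<noteq> s)"

definition sl3 :: "(('a::field)^3^3) set" where
  "sl3 = {A. det A = 1}"

text \<open>An element of PSL_3 is the coset of an SL_3 matrix modulo the centre
  (scalar matrices c I with c^3 = 1).\<close>

definition pcls :: "('a::field)^3^3 \<Rightarrow> ('a^3^3) set" where
  "pcls A = {mat c ** A | c. c ^ 3 = 1}"

definition psl3 :: "(('a::field)^3^3) set set" where
  "psl3 = pcls ` sl3"

definition prep :: "(('a::field)^3^3) set \<Rightarrow> 'a^3^3" where
  "prep X = (SOME A. A \<in> X)"

definition pconj :: "(('a::field)^3^3) set \<Rightarrow> ('a^3^3) set \<Rightarrow> ('a^3^3) set" where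
  "pconj X Y = pcls (prep X ** prep Y ** matrix_inv (prep X))"

definition psl3_conj_class :: "(('a::field)^3^3) set \<Rightarrow> ('a^3^3) set set" where
  "psl3_conj_class X = {pconj G X | G. G \<in> psl3}"

text \<open>Unipotent of type (3): a single Jordan block of size 3, i.e. (A - I)^3 = 0
  and (A - I)^2 \<noteq> 0.\<close>

definition regular_unipotent3 :: "('a::field)^3^3 \<Rightarrow> bool" where
  "regular_unipotent3 A \<longleftrightarrow> A \<in> sl3 \<and>
     (A - mat 1) ** (A - mat 1) ** (A - mat 1) = 0 \<and>
     (A - mat 1) ** (A - mat 1) \<noteq> 0"

end

theory Submission
  imports Defs "HOL-Computational_Algebra.Polynomial"
begin

lemma fermat_ff:
  fixes x :: "'a::{field,finite}"
  assumes "x \<noteq> 0"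
  shows "x ^ (CARD('a) - 1) = 1"
proof -
  let ?U = "UNIV - {0::'a}"
  have bij: "bij_betw (\<lambda>a. x*a) ?U ?U"
    by (rule bij_betwI[where g="\<lambda>a. a/x"]) (use assms in auto)
  have "prod (\<lambda>a. x*a) ?U = prod id ?U"
    using prod.reindex_bij_betw[OF bij, of id] by simp
  moreover have "prod (\<lambda>a. x*a) ?U = x ^ card ?U * prod id ?U"
    by (simp add: prod.distrib)
  moreover have "prod id ?U \<noteq> 0" by simp
  moreover have "card ?U = CARD('a) - 1"
    by (simp add: card_Diff_singleton)
  ultimately show ?thesis by (metis mult_cancel_right2)
qed

lemma four_mod: "(4::nat)^m mod 3 = 1"
proof (induct m)
  case 0 then show ?case by simp
next
  case (Suc m)
  have "(4::nat)^Suc m = 4^m + 3 * 4^m" by simp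
  hence "(4::nat)^Suc m mod 3 = 4^m mod 3" by (metis mod_mult_self2)
  thus ?case using Suc by simp
qed
lemma three_dvd: "3 dvd ((4::nat)^m - 1)"
proof -
  have "(4::nat)^m mod 3 = 1 mod 3" using four_mod by simp
  thus ?thesis using mod_eq_dvd_iff_nat[of 1 "4^m" 3] by simp
qed
lemma odd_four: "m \<ge> 1 \<Longrightarrow> odd ((4::nat)^m - 1)"
proof -
  assume "m \<ge> 1"
  hence e: "even ((4::nat)^m)" by simp
  obtain k where k: "(4::nat)^m = Suc k" by (metis gr0_implies_Suc zero_less_power zero_less_numeral)
  show ?thesis using e k by simp
qed

lemma char2_ff:
  assumes "m \<ge> 1" and "CARD('a::{field,finite}) = 2 ^ (2 * m)"
  shows "(1::'a) + 1 = 0"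
proof -
  have "CARD('a) = 4 ^ m" using assms(2) by (simp add: power_mult)
  hence "odd (CARD('a) - 1)" using odd_four[OF assms(1)] by simp
  hence "(-1::'a) = 1" using fermat_ff[of "-1::'a"] by simp
  hence "(1::'a) + 1 = 1 + (-1)" by simp
  thus ?thesis by simp
qed

lemma omega_ff:
  assumes "m \<ge> 1" and "CARD('a::{field,finite}) = 2 ^ (2 * m)"
  shows "\<exists>w::'a. w*w + w + 1 = 0"
proof (rule ccontr)
  assume no: "\<not> (\<exists>w::'a. w*w + w + 1 = 0)"
  let ?q = "CARD('a)"
  let ?U = "UNIV - {0::'a}"
  have q4: "?q = 4 ^ m" using assms by (simp add: power_mult)
  have "3 dvd ?q - 1" using q4 three_dvd by simp
  then obtain k where k: "?q - 1 = 3 * k" by blast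
  have "(4::nat) ^ 1 \<le> 4 ^ m" by (rule power_increasing[OF assms(1)]) simp
  hence "?q \<ge> 4" using q4 by simp
  hence kpos: "k \<ge> 1" using k by linarith
  have inj: "inj_on (\<lambda>x. x^3) ?U"
  proof (rule inj_onI)
    fix x y :: 'a assume x: "x \<in> ?U" and y: "y \<in> ?U" and e: "x^3 = y^3"
    define z where "z = x / y"
    have "z^3 = 1" using e y by (simp add: z_def power_divide)
    hence "(z - 1) * (z*z + z + 1) = 0" by (simp add: algebra_simps power3_eq_cube)
    hence "z = 1" using no by auto
    thus "x = y" using y by (simp add: z_def)
  qed
  have img: "(\<lambda>x. x^3) ` ?U = ?U"
    by (rule endo_inj_surj[OF _ _ inj]) auto
  have all: "y ^ k = 1" if "y \<in> ?U" for y
  proof -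
    have "y \<in> (\<lambda>x. x^3) ` ?U" using img that by (simp only:)
    then obtain x where "x \<in> ?U" "y = x^3" by blast
    hence "y ^ k = x ^ (3 * k)" by (simp add: power_mult)
    also have "\<dots> = x ^ (?q - 1)" by (simp only: k)
    also have "\<dots> = 1" using \<open>x \<in> ?U\<close> fermat_ff by auto
    finally show ?thesis .
  qed
  define p :: "'a poly" where "p = monom 1 k - 1"
  have "coeff p k = 1" using kpos by (simp add: p_def coeff_monom)
  hence pnz: "p \<noteq> 0" by auto
  have degp: "degree p \<le> k" unfolding p_def
    by (rule degree_diff_le) (auto simp: degree_monom_le)
  have "?U \<subseteq> {x. poly p x = 0}" using all by (auto simp: p_def poly_monom)
  hence "card ?U \<le> card {x. poly p x = 0}" by (intro card_mono) auto
  also have "\<dots> \<le> degree p" by (rule card_poly_roots_bound[OF pnz])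
  finally have "card ?U \<le> k" using degp by linarith
  moreover have "card ?U = 3 * k" using k by (simp add: card_Diff_singleton)
  ultimately show False using kpos by linarith
qed

definition sc :: "'a::field \<Rightarrow> 'a^3^3 \<Rightarrow> 'a^3^3" where "sc c X = mat c ** X"

lemma sc_entry: "sc c X $ i $ j = c * X $ i $ j"
  by (simp add: sc_def matrix_matrix_mult_def mat_def if_distrib if_distribR sum.delta cong: if_cong)

lemma sc_left: "sc c X ** Y = sc c (X ** Y)"
  by (simp add: vec_eq_iff sc_entry matrix_matrix_mult_def sum_distrib_left mult.assoc)
lemma sc_right: "X ** sc c Y = sc c (X ** Y)"
  by (simp add: vec_eq_iff sc_entry matrix_matrix_mult_def sum_distrib_left algebra_simps)
lemma sc_sc: "sc c (sc d X) = sc (c*d) X"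
  by (simp add: vec_eq_iff sc_entry mult.assoc)
lemma sc_one: "sc 1 X = X"
  by (simp add: vec_eq_iff sc_entry)

lemma inv_props:
  fixes M :: "'a::field^3^3"
  assumes "invertible M"
  shows "M ** matrix_inv M = mat 1" "matrix_inv M ** M = mat 1"
  using someI_ex[OF assms[unfolded invertible_def]] unfolding matrix_inv_def by auto

lemma pcls_sc: "pcls X = {sc c X | c. c^3 = 1}"
  by (simp add: pcls_def sc_def)

lemma self_mem: "X \<in> pcls X"
  unfolding pcls_sc by (rule CollectI, rule exI[of _ 1]) (simp add: sc_one)

lemma pcls_scale:
  assumes "c^3 = (1::'a::field)"
  shows "pcls (sc c P) = pcls P"
proof -
  have c0: "c \<noteq> 0" using assms by auto
  show ?thesis unfolding pcls_sc
  proof (intro set_eqI iffI)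
    fix Q assume "Q \<in> {sc d (sc c P) | d. d^3 = 1}"
    then obtain d where "d^3 = 1" "Q = sc d (sc c P)" by blast
    thus "Q \<in> {sc d P | d. d^3 = 1}" using assms
      by (auto simp: sc_sc power_mult_distrib intro!: exI[of _ "d*c"])
  next
    fix Q assume "Q \<in> {sc d P | d. d^3 = 1}"
    then obtain d where d: "d^3 = 1" "Q = sc d P" by blast
    have "Q = sc (d/c) (sc c P)" using c0 d by (simp add: sc_sc)
    moreover have "(d/c)^3 = 1" using d assms by (simp add: power_divide)
    ultimately show "Q \<in> {sc d (sc c P) | d. d^3 = 1}" by blast
  qed
qed

lemma pcls_eqD:
  assumes "pcls P = pcls Q"
  shows "\<exists>c. c^3 = (1::'a::field) \<and> Q = sc c P"
proof -
  have "Q \<in> pcls P" using self_mem[of Q] assms by simp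
  thus ?thesis unfolding pcls_sc by blast
qed

lemma prep_pcls: "\<exists>c. c^3 = (1::'a::field) \<and> prep (pcls M) = sc c M"
proof -
  have "prep (pcls M) \<in> pcls M" unfolding prep_def by (rule someI[of _ M], rule self_mem)
  thus ?thesis unfolding pcls_sc by blast
qed

lemma conj_lemma:
  fixes M N P :: "'a::field^3^3"
  assumes "invertible M" "M ** N = sc c P ** M" "c^3 = 1"
  shows "pcls (M ** N ** matrix_inv M) = pcls P"
proof -
  have "M ** N ** matrix_inv M = sc c P ** (M ** matrix_inv M)"
    using assms(2) by (simp add: matrix_mul_assoc)
  also have "\<dots> = sc c P" using inv_props[OF assms(1)] by simp
  finally show ?thesis using pcls_scale[OF assms(3)] by simp
qed

lemma invertible_sc:
  fixes M :: "'a::field^3^3"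
  assumes "invertible M" "c \<noteq> 0"
  shows "invertible (sc c M)"
proof -
  have "sc c M ** sc (1/c) (matrix_inv M) = mat 1"
    using assms by (simp add: sc_left sc_right sc_sc inv_props sc_one)
  thus ?thesis using invertible_right_inverse by blast
qed

lemma pconj_pcls:
  fixes M N :: "'a::field^3^3"
  assumes "invertible M"
  shows "pconj (pcls M) (pcls N) = pcls (M ** N ** matrix_inv M)"
proof -
  obtain c where c: "c^3 = 1" "prep (pcls M) = sc c M" using prep_pcls by blast
  obtain d where d: "d^3 = 1" "prep (pcls N) = sc d N" using prep_pcls by blast
  have c0: "c \<noteq> 0" using c by auto
  have inv: "invertible (sc c M)" by (rule invertible_sc[OF assms c0])
  have "sc c M ** sc d N = sc d (M ** N ** matrix_inv M) ** sc c M"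
    using inv_props[OF assms] by (simp add: sc_left sc_right sc_sc matrix_mul_assoc[symmetric] mult.commute)
  hence "pcls (sc c M ** sc d N ** matrix_inv (sc c M)) = pcls (M ** N ** matrix_inv M)"
    by (rule conj_lemma[OF inv _ d(1)])
  thus ?thesis unfolding pconj_def c d .
qed

lemma invertible_det: "invertible (M::'a::field^3^3) \<longleftrightarrow> det M \<noteq> 0"
  by (rule invertible_det_nz)

definition J3 :: "'a::field^3^3" where
  "J3 = (\<chi> i j. if i = j \<or> (i = 2 \<and> j = 1) \<or> (i = 3 \<and> j = 2) then 1 else 0)"

lemma mv_smul: "(N::'a::field^3^3) *v (c *s x) = c *s (N *v x)"
  by (simp add: vec_eq_iff matrix_vector_mult_def sum_distrib_left algebra_simps)

lemma mv_add: "(N::'a::field^3^3) *v (x + y) = N *v x + N *v y"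
  by (simp add: vec_eq_iff matrix_vector_mult_def sum.distrib algebra_simps)

lemma smul_zero: "c *s (w::'a::field^3) = 0 \<Longrightarrow> w \<noteq> 0 \<Longrightarrow> c = 0"
  by (metis vec_eq_iff vector_smult_component zero_index mult_eq_0_iff)

lemma jordan_basis:
  fixes A :: "'a::field^3^3"
  assumes n3: "(A - mat 1) ** (A - mat 1) ** (A - mat 1) = 0"
    and n2: "(A - mat 1) ** (A - mat 1) \<noteq> 0"
  shows "\<exists>h. invertible h \<and> A ** h = h ** J3"
proof -
  define N where "N = A - mat 1"
  obtain v where v: "(N ** N) *v v \<noteq> 0"
    using n2 unfolding N_def by (metis matrix_eq matrix_vector_mult_0)
  define u1 where "u1 = v"
  define u2 where "u2 = N *v u1"
  define u3 where "u3 = N *v u2"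
  have u3nz: "u3 \<noteq> 0" using v by (simp add: u3_def u2_def u1_def matrix_vector_mul_assoc)
  have Nu3: "N *v u3 = 0"
    using n3 unfolding N_def[symmetric] u3_def u2_def
    by (metis matrix_vector_mul_assoc matrix_vector_mult_0)
  have Av: "A *v x = N *v x + x" for x
    by (simp add: N_def matrix_vector_mult_diff_rdistrib)
  define h :: "'a^3^3" where "h = (\<chi> i j. if j = 1 then u1$i else if j = 2 then u2$i else u3$i)"
  have col: "(A ** h) $ i $ j = (A *v (\<chi> k. h$k$j)) $ i" for i j
    by (simp add: matrix_matrix_mult_def matrix_vector_mult_def)
  have c1: "(\<chi> k. h$k$1) = u1" "(\<chi> k. h$k$2) = u2" "(\<chi> k. h$k$3) = u3"
    by (simp_all add: h_def vec_eq_iff)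
  have eq: "A ** h = h ** J3"
  proof (simp add: vec_eq_iff, intro allI)
    fix i j :: 3
    show "(A ** h) $ i $ j = (h ** J3) $ i $ j"
      unfolding col
      using exhaust_3[of j]
      apply (elim disjE)
        apply (simp_all add: c1 Av matrix_matrix_mult_def sum_3 J3_def h_def)
        apply (simp_all add: u2_def[symmetric] u3_def[symmetric] Nu3 add.commute)
      done
  qed
  have hv: "h *v x = x$1 *s u1 + x$2 *s u2 + x$3 *s u3" for x
    by (simp add: vec_eq_iff matrix_vector_mult_def sum_3 h_def algebra_simps)
  have inj: "x = 0" if hx: "h *v x = 0" for x
  proof -
    have e1: "N *v (N *v (h *v x)) = x$1 *s u3"
      by (simp add: hv mv_add mv_smul Nu3 u2_def[symmetric] u3_def[symmetric])
    hence a: "x$1 = 0" using hx u3nz smul_zero by (metis matrix_vector_mult_0_right)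
    have e2: "N *v (h *v x) = x$2 *s u3"
      using a by (simp add: hv mv_add mv_smul Nu3 u2_def[symmetric] u3_def[symmetric])
    hence b: "x$2 = 0" using hx u3nz smul_zero by (metis matrix_vector_mult_0_right)
    have "h *v x = x$3 *s u3" using a b by (simp add: hv)
    hence c: "x$3 = 0" using hx u3nz smul_zero by metis
    show "x = 0" using a b c by (simp add: vec_eq_iff forall_3)
  qed
  have "invertible h"
    using inj unfolding invertible_left_inverse matrix_left_invertible_ker by blast
  thus ?thesis using eq by blast
qed

datatype f4 = Z | I | W | V

fun fa :: "f4 \<Rightarrow> f4 \<Rightarrow> f4" where
  "fa Z y = y" | "fa x Z = x" | "fa I I = Z" | "fa I W = V" | "fa I V = W"
| "fa W I = V" | "fa W W = Z" | "fa W V = I" | "fa V I = W" | "fa V W = I" | "fa V V = Z"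

fun fm :: "f4 \<Rightarrow> f4 \<Rightarrow> f4" where
  "fm Z y = Z" | "fm x Z = Z" | "fm I y = y" | "fm x I = x" | "fm W W = V" | "fm W V = I"
| "fm V W = I" | "fm V V = W"

definition lmul :: "f4 list list \<Rightarrow> f4 list list \<Rightarrow> f4 list list" where
  "lmul A B = map (\<lambda>i. map (\<lambda>j. fa (fa (fm (A!i!0) (B!0!j)) (fm (A!i!1) (B!1!j))) (fm (A!i!2) (B!2!j))) [0,1,2]) [0,1,2]"

definition lsc :: "f4 \<Rightarrow> f4 list list \<Rightarrow> f4 list list" where
  "lsc c A = map (\<lambda>i. map (\<lambda>j. fm c (A!i!j)) [0,1,2]) [0,1,2]"

definition ldet :: "f4 list list \<Rightarrow> f4" where
  "ldet A = fa (fa (fa (fa (fa (fm (fm (A!0!0) (A!1!1)) (A!2!2)) (fm (fm (A!0!1) (A!1!2)) (A!2!0)))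
      (fm (fm (A!0!2) (A!1!0)) (A!2!1))) (fm (fm (A!0!0) (A!1!2)) (A!2!1)))
      (fm (fm (A!0!1) (A!1!0)) (A!2!2))) (fm (fm (A!0!2) (A!1!1)) (A!2!0))"

definition ltr :: "f4 list list \<Rightarrow> f4" where
  "ltr A = fa (fa (A!0!0) (A!1!1)) (A!2!2)"

definition Ks :: "f4 list list list" where
  "Ks = [[[I,Z,Z],[I,I,Z],[Z,I,I]],
    [[Z,Z,W],[I,W,V],[V,W,V]],
    [[Z,W,W],[V,V,I],[W,W,W]],
    [[Z,W,V],[V,V,Z],[W,Z,W]],
    [[W,Z,W],[W,W,V],[W,W,I]],
    [[W,W,W],[W,V,I],[W,Z,Z]],
    [[I,I,V],[I,W,V],[Z,I,W]],
    [[V,W,V],[V,V,Z],[V,W,I]],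
    [[W,I,V],[W,W,V],[Z,Z,I]],
    [[Z,V,V],[I,I,W],[V,Z,Z]],
    [[Z,Z,V],[W,V,I],[I,V,W]],
    [[Z,I,W],[W,W,Z],[I,I,V]],
    [[I,Z,Z],[I,I,Z],[I,I,I]],
    [[V,Z,V],[V,V,I],[Z,V,I]],
    [[V,V,V],[V,I,W],[Z,V,V]],
    [[V,V,W],[V,I,W],[V,Z,V]],
    [[W,I,W],[W,W,Z],[Z,Z,I]],
    [[I,V,W],[I,I,W],[I,V,I]]]"

definition Gs :: "f4 list list list" where
  "Gs = [[[I,Z,Z],[Z,I,Z],[Z,Z,I]],
    [[Z,Z,I],[W,I,I],[Z,V,V]],
    [[Z,Z,I],[W,I,Z],[W,W,V]],
    [[Z,Z,I],[V,I,W],[W,I,V]],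
    [[Z,Z,I],[W,I,I],[Z,V,W]],
    [[Z,Z,I],[W,I,Z],[W,W,W]],
    [[Z,Z,I],[V,I,V],[I,Z,I]],
    [[Z,Z,I],[V,I,W],[W,I,W]],
    [[Z,Z,I],[V,I,V],[I,Z,Z]],
    [[Z,Z,I],[V,I,I],[V,V,V]],
    [[Z,Z,I],[V,I,Z],[Z,W,W]],
    [[Z,Z,I],[W,I,V],[I,Z,I]],
    [[I,Z,Z],[Z,I,Z],[Z,I,I]],
    [[Z,Z,I],[V,I,Z],[Z,W,V]],
    [[Z,Z,I],[V,I,I],[V,V,W]],
    [[Z,Z,I],[W,I,W],[V,I,W]],
    [[Z,Z,I],[W,I,V],[I,Z,Z]],
    [[Z,Z,I],[W,I,W],[V,I,V]]]"

definition Ts :: "nat list list" where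
  "Ts = [[0,5,1,6,2,4,7,8,3,10,14,15,12,9,13,16,17,11],
    [7,1,6,5,8,2,3,4,0,9,13,17,15,11,16,14,12,10],
    [6,4,2,8,3,7,5,0,1,14,15,10,11,13,17,12,9,16],
    [2,0,7,3,5,6,8,1,4,12,11,16,13,15,10,9,14,17],
    [3,6,5,1,4,8,0,2,7,11,16,12,17,10,14,13,15,9],
    [8,7,3,0,1,5,4,6,2,15,10,14,16,17,9,11,13,12],
    [1,8,4,2,7,0,6,3,5,16,12,11,9,14,15,17,10,13],
    [5,2,8,4,0,3,1,7,6,13,17,9,10,16,12,15,11,14],
    [4,3,0,7,6,1,2,5,8,17,9,13,14,12,11,10,16,15],
    [8,1,5,6,7,3,2,0,4,9,17,13,16,10,15,12,14,11],
    [3,4,8,2,6,5,7,1,0,14,10,15,17,16,11,9,12,13],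
    [5,0,3,7,2,8,6,4,1,12,16,11,10,17,13,14,9,15],
    [0,2,4,8,5,1,3,6,7,13,9,17,12,14,10,11,15,16],
    [7,8,2,4,1,6,0,5,3,16,11,12,15,13,9,10,17,14],
    [6,3,7,0,4,2,1,8,5,17,13,9,11,15,14,16,10,12],
    [4,6,1,5,3,0,8,7,2,11,12,16,14,9,17,15,13,10],
    [2,5,6,1,0,7,4,3,8,10,15,14,13,11,12,17,16,9],
    [1,7,0,3,8,4,5,2,6,15,14,10,9,12,16,13,11,17]]"

definition Cs :: "f4 list list" where
  "Cs = [[I,I,I,I,I,I,I,I,I,I,I,I,I,I,I,I,I,I],
    [I,I,I,I,I,I,I,I,I,I,I,I,I,I,I,I,I,I],
    [I,I,I,I,I,I,I,I,I,I,I,I,I,I,I,I,I,I],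
    [I,I,I,I,I,I,I,I,I,I,I,I,I,I,I,I,I,I],
    [I,I,I,I,I,I,I,I,I,I,I,I,I,I,I,I,I,I],
    [I,I,I,I,I,I,I,I,I,I,I,I,I,I,I,I,I,I],
    [I,I,I,I,I,I,I,I,I,I,I,I,I,I,I,I,I,I],
    [I,I,I,I,I,I,I,I,I,I,I,I,I,I,I,I,I,I],
    [I,I,I,I,I,I,I,I,I,I,I,I,I,I,I,I,I,I],
    [I,I,I,I,I,I,I,I,I,I,I,I,I,I,I,I,I,I],
    [I,I,I,I,I,I,I,I,I,I,I,I,I,I,I,I,I,I],
    [I,I,I,I,I,I,I,I,I,I,I,I,I,I,I,I,I,I],
    [I,I,I,I,I,I,I,I,I,I,I,I,I,I,I,I,I,I],
    [I,I,I,I,I,I,I,I,I,I,I,I,I,I,I,I,I,I],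
    [I,I,I,I,I,I,I,I,I,I,I,I,I,I,I,I,I,I],
    [I,I,I,I,I,I,I,I,I,I,I,I,I,I,I,I,I,I],
    [I,I,I,I,I,I,I,I,I,I,I,I,I,I,I,I,I,I],
    [I,I,I,I,I,I,I,I,I,I,I,I,I,I,I,I,I,I]]"


definition emb :: "'a::field \<Rightarrow> f4 \<Rightarrow> 'a" where
  "emb w x = (case x of Z \<Rightarrow> 0 | I \<Rightarrow> 1 | W \<Rightarrow> w | V \<Rightarrow> w + 1)"

lemma emb_fa:
  fixes w :: "'a::field"
  assumes t2: "1 + 1 = (0::'a)" and wq: "w*w + w + 1 = 0"
  shows "emb w (fa x y) = emb w x + emb w y"
  using t2 wq by (cases x; cases y; simp add: emb_def; algebra)

lemma emb_facts:
  fixes w :: "'a::field"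
  assumes t2: "1 + 1 = (0::'a)" and wq: "w*w + w + 1 = 0"
  shows "w * w = w + 1" "w * (w+1) = 1" "(w+1) * w = 1" "(w+1)*(w+1) = w"
    "w \<noteq> 0" "w \<noteq> 1" "w + 1 \<noteq> 0" "w + 1 \<noteq> 1" "w \<noteq> w + 1" "w + 1 \<noteq> w"
proof -
  have dbl: "y + y = 0" for y :: 'a
    by (metis t2 distrib_right mult_1 mult_zero_left)
  have neg: "- y = y" for y :: 'a using dbl add.inverse_unique by blast
  have "w * w = - (w + 1)" using wq by (simp only: eq_neg_iff_add_eq_0 add.assoc)
  thus a: "w * w = w + 1" using neg by simp
  have two: "(2::'a) = 0" using t2 by simp
  have d2: "w + (w + y) = y" for y using dbl by (simp add: add.assoc[symmetric])
  show "w * (w+1) = 1" by (simp add: distrib_left a add.assoc d2 two)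
  show "(w+1) * w = 1" by (simp add: distrib_right a add.assoc d2 two)
  show "(w+1)*(w+1) = w" by (simp add: distrib_right distrib_left a add.assoc d2 t2 two)
  show n0: "w \<noteq> 0" using wq by auto
  show n1: "w \<noteq> 1" using wq t2 by auto
  show "w + 1 \<noteq> 0" using n1 neg by (metis add.commute add_left_cancel dbl)
  show "w + 1 \<noteq> 1" using n0 by simp
  show "w \<noteq> w + 1" by simp
  show "w + 1 \<noteq> w" by simp
qed

lemma emb_fm:
  fixes w :: "'a::field"
  assumes t2: "1 + 1 = (0::'a)" and wq: "w*w + w + 1 = 0"
  shows "emb w (fm x y) = emb w x * emb w y"
  using emb_facts[OF t2 wq] by (cases x; cases y; simp add: emb_def)

lemma emb_inj:
  fixes w :: "'a::field"
  assumes t2: "1 + 1 = (0::'a)" and wq: "w*w + w + 1 = 0"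
  shows "emb w x = emb w y \<Longrightarrow> x = y"
  using emb_facts[OF t2 wq] by (cases x; cases y; auto simp: emb_def dest: sym)

definition rowok :: "nat \<Rightarrow> bool" where
  "rowok i = list_all (\<lambda>j.
     lmul (Ks!i) (Ks!j) = lmul (lsc (Cs!i!j) (Ks!(Ts!i!j))) (Ks!i)
   \<and> fm (Cs!i!j) (fm (Cs!i!j) (Cs!i!j)) = I
   \<and> (j < 9 \<longrightarrow> Ts!i!j < 9) \<and> (9 \<le> j \<longrightarrow> 9 \<le> Ts!i!j \<and> Ts!i!j < 18)
   \<and> (i \<noteq> j \<longrightarrow> list_ex (\<lambda>a. list_ex (\<lambda>b. Ks!i!a!b \<noteq> Ks!j!a!b) [0,1,2]) [0,1,2])) [0..<18]"

lemma rowok0: "rowok 0" by code_simp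
lemma rowok1: "rowok 1" by code_simp
lemma rowok2: "rowok 2" by code_simp
lemma rowok3: "rowok 3" by code_simp
lemma rowok4: "rowok 4" by code_simp
lemma rowok5: "rowok 5" by code_simp
lemma rowok6: "rowok 6" by code_simp
lemma rowok7: "rowok 7" by code_simp
lemma rowok8: "rowok 8" by code_simp
lemma rowok9: "rowok 9" by code_simp
lemma rowok10: "rowok 10" by code_simp
lemma rowok11: "rowok 11" by code_simp
lemma rowok12: "rowok 12" by code_simp
lemma rowok13: "rowok 13" by code_simp
lemma rowok14: "rowok 14" by code_simp
lemma rowok15: "rowok 15" by code_simp
lemma rowok16: "rowok 16" by code_simp
lemma rowok17: "rowok 17" by code_simp

lemma nat18: "(i::nat) < 18 \<Longrightarrow> i = 0 \<or> i = 1 \<or> i = 2 \<or> i = 3 \<or> i = 4 \<or> i = 5 \<or> i = 6 \<or> i = 7 \<or> i = 8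
  \<or> i = 9 \<or> i = 10 \<or> i = 11 \<or> i = 12 \<or> i = 13 \<or> i = 14 \<or> i = 15 \<or> i = 16 \<or> i = 17"
  by presburger

lemma chk_table: "i < 18 \<Longrightarrow> rowok i"
  by (drule nat18) (elim disjE; simp only: rowok0 rowok1 rowok2 rowok3 rowok4 rowok5 rowok6 rowok7 rowok8 rowok9 rowok10 rowok11 rowok12 rowok13 rowok14 rowok15 rowok16 rowok17)

lemma chk_single: "list_all (\<lambda>i. Ts!i!i = i \<and> lmul (Gs!i) (Ks!0) = lmul (Ks!i) (Gs!i) \<and> ldet (Gs!i) = I
   \<and> ldet (Ks!i) = I \<and> ltr (Ks!i) = I) [0..<18]"
  by code_simp

lemma chk_D: "Ts!0!9 = 10 \<and> Ts!9!10 = 17 \<and> Ts!0!17 = 11"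
  by code_simp

definition ix :: "3 \<Rightarrow> nat" where "ix i = (if i = 1 then 0 else if i = 2 then 1 else 2)"

definition emat :: "'a::field \<Rightarrow> f4 list list \<Rightarrow> 'a^3^3" where
  "emat w L = (\<chi> i j. emb w (L ! ix i ! ix j))"

lemma ix_simps: "ix 1 = 0" "ix 2 = 1" "ix 3 = 2" by (simp_all add: ix_def)

context
  fixes w :: "'a::field"
  assumes t2: "1 + 1 = (0::'a)" and wq: "w*w + w + 1 = 0"
begin

lemma emat_mul: "emat w (lmul A B) = emat w A ** emat w B"
  by (simp add: vec_eq_iff forall_3 emat_def lmul_def matrix_matrix_mult_def sum_3 ix_simps emb_fa[OF t2 wq] emb_fm[OF t2 wq])

lemma emat_lsc: "emat w (lsc c A) = sc (emb w c) (emat w A)"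
  by (simp add: vec_eq_iff forall_3 emat_def lsc_def sc_entry ix_simps emb_fm[OF t2 wq])

lemma minus_plus: "(a::'a) - b = a + b"
proof -
  have dbl: "b + b = 0" by (metis t2 distrib_right mult_1 mult_zero_left)
  hence nb: "- b = b" using add.inverse_unique by blast
  show ?thesis by (simp only: diff_conv_add_uminus nb)
qed

lemma emat_det: "det (emat w A) = emb w (ldet A)"
  by (simp add: det_3 emat_def ix_simps ldet_def emb_fa[OF t2 wq] emb_fm[OF t2 wq] minus_plus)

lemma emat_tr: "emat w A $1$1 + emat w A $2$2 + emat w A $3$3 = emb w (ltr A)"
  by (simp add: emat_def ix_simps ltr_def emb_fa[OF t2 wq])

lemma emat_neq:
  assumes "a < 3" "b < 3" "A!a!b \<noteq> B!a!b"
  shows "emat w A \<noteq> emat w B"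
proof
  assume e: "emat w A = emat w B"
  define i :: 3 where "i = (if a = 0 then 1 else if a = 1 then 2 else 3)"
  define j :: 3 where "j = (if b = 0 then 1 else if b = 1 then 2 else 3)"
  have "ix i = a" "ix j = b" using assms(1,2) by (auto simp: i_def j_def ix_simps)
  hence "emb w (A!a!b) = emb w (B!a!b)" using arg_cong[OF e, of "\<lambda>M. M$i$j"] by (simp add: emat_def)
  thus False using emb_inj[OF t2 wq] assms(3) by blast
qed

lemma emat_J: "emat w (Ks!0) = J3"
proof -
  have "Ks!0 = [[I,Z,Z],[I,I,Z],[Z,I,I]]" by (simp add: Ks_def)
  thus ?thesis by (simp add: vec_eq_iff forall_3 emat_def ix_simps J3_def emb_def)
qed

end

theorem mainTheorem15:
  fixes m :: nat and A :: "('a::{field,finite})^3^3"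
  assumes "m \<ge> 1"
    and "CARD('a) = 2 ^ (2 * m)"
    and "regular_unipotent3 A"
  shows "type_D pconj (psl3_conj_class (pcls A))"
proof -
  have t2: "(1::'a) + 1 = 0" by (rule char2_ff[OF assms(1,2)])
  obtain w :: 'a where wq: "w*w + w + 1 = 0" using omega_ff[OF assms(1,2)] by blast
  have n3: "(A - mat 1) ** (A - mat 1) ** (A - mat 1) = 0"
    and n2: "(A - mat 1) ** (A - mat 1) \<noteq> 0"
    using assms(3) unfolding regular_unipotent3_def by auto
  obtain h where hinv: "invertible h" and Ah: "A ** h = h ** J3"
    using jordan_basis[OF n3 n2] by blast
  define hi where "hi = matrix_inv h"
  have hh: "h ** hi = mat 1" "hi ** h = mat 1" using inv_props[OF hinv] by (simp_all add: hi_def)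
  define T where "T K = h ** K ** hi" for K :: "'a^3^3"
  have T_mul: "T K ** T L = T (K ** L)" for K L
  proof -
    have "T K ** T L = h ** K ** (hi ** h) ** L ** hi" by (simp add: T_def matrix_mul_assoc)
    thus ?thesis by (simp add: hh T_def matrix_mul_assoc)
  qed
  have T_sc: "T (sc c K) = sc c (T K)" for c K by (simp add: T_def sc_left sc_right)
  have T_back: "hi ** T K ** h = K" for K
  proof -
    have "hi ** T K ** h = (hi ** h) ** K ** (hi ** h)" by (simp add: T_def matrix_mul_assoc)
    thus ?thesis by (simp add: hh)
  qed
  have T_inj: "T K = T L \<Longrightarrow> K = L" for K L using T_back by metis
  have T_det: "det (T K) = det K" for K
  proof -
    have "det (T K) = det K * (det h * det hi)" by (simp add: T_def det_mul algebra_simps)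
    also have "det h * det hi = 1" using hh det_mul[of h hi] by (simp add: det_I)
    finally show ?thesis by simp
  qed
  have Aeq: "A = T J3"
  proof -
    have "A = A ** (h ** hi)" by (simp add: hh)
    also have "\<dots> = T J3" by (simp add: matrix_mul_assoc Ah T_def)
    finally show ?thesis .
  qed
  define E where "E i = emat w (Ks!i)" for i
  define M where "M i = T (E i)" for i
  define GG where "GG i = T (emat w (Gs!i))" for i
  define P where "P i = pcls (M i)" for i
  have tab: "lmul (Ks!i) (Ks!j) = lmul (lsc (Cs!i!j) (Ks!(Ts!i!j))) (Ks!i)
   \<and> fm (Cs!i!j) (fm (Cs!i!j) (Cs!i!j)) = I
   \<and> (j < 9 \<longrightarrow> Ts!i!j < 9) \<and> (9 \<le> j \<longrightarrow> 9 \<le> Ts!i!j \<and> Ts!i!j < 18)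
   \<and> (i \<noteq> j \<longrightarrow> list_ex (\<lambda>a. list_ex (\<lambda>b. Ks!i!a!b \<noteq> Ks!j!a!b) [0,1,2]) [0,1,2])"
    if "i < 18" "j < 18" for i j
    using chk_table[OF that(1)] that(2) unfolding rowok_def list_all_iff by auto
  have sing: "Ts!i!i = i \<and> lmul (Gs!i) (Ks!0) = lmul (Ks!i) (Gs!i) \<and> ldet (Gs!i) = I
   \<and> ldet (Ks!i) = I \<and> ltr (Ks!i) = I" if "i < 18" for i
    using chk_single that unfolding list_all_iff by auto
  have Tbound: "Ts!i!j < 18" if "i < 18" "j < 18" for i j
    using tab[OF that] by (cases "j < 9") auto
  have cube: "(emb w (Cs!i!j))^3 = 1" if "i < 18" "j < 18" for i j
  proof -
    have "emb w (fm (Cs!i!j) (fm (Cs!i!j) (Cs!i!j))) = 1" using tab[OF that] by (simp add: emb_def)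
    thus ?thesis by (simp add: emb_fm[OF t2 wq] power3_eq_cube mult.assoc)
  qed
  have E_mul: "E i ** E j = sc (emb w (Cs!i!j)) (E (Ts!i!j)) ** E i" if "i < 18" "j < 18" for i j
    using arg_cong[OF conjunct1[OF tab[OF that]], of "emat w"]
    by (simp add: E_def emat_mul[OF t2 wq] emat_lsc[OF t2 wq])
  have Minv: "invertible (M i)" if "i < 18" for i
    using sing[OF that] by (simp add: invertible_det_nz M_def T_det E_def emat_det[OF t2 wq] emb_def)
  have opM: "pconj (P i) (P j) = P (Ts!i!j)" if "i < 18" "j < 18" for i j
  proof -
    have "M i ** M j = sc (emb w (Cs!i!j)) (M (Ts!i!j)) ** M i"
      unfolding M_def T_mul E_mul[OF that] by (simp add: T_mul[symmetric] T_sc)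
    thus ?thesis unfolding P_def pconj_pcls[OF Minv[OF that(1)]]
      by (rule conj_lemma[OF Minv[OF that(1)] _ cube[OF that]])
  qed
  let ?X = "psl3_conj_class (pcls A)"
  have mem: "P i \<in> ?X" if "i < 18" for i
  proof -
    have dG: "det (GG i) = 1"
      using sing[OF that] by (simp add: GG_def T_det emat_det[OF t2 wq] emb_def)
    hence Ginv: "invertible (GG i)" by (simp add: invertible_det_nz)
    have "pcls (GG i) \<in> psl3" using dG by (auto simp: psl3_def sl3_def)
    moreover have "GG i ** A = sc 1 (M i) ** GG i"
    proof -
      have "emat w (Gs!i) ** E 0 = E i ** emat w (Gs!i)"
        using arg_cong[OF conjunct1[OF conjunct2[OF sing[OF that]]], of "emat w"]
        by (simp add: E_def emat_mul[OF t2 wq])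
      moreover have "A = T (E 0)" using Aeq by (simp add: E_def emat_J[OF t2 wq])
      ultimately show ?thesis by (simp add: GG_def M_def T_mul sc_one)
    qed
    hence "pconj (pcls (GG i)) (pcls A) = P i"
      unfolding P_def pconj_pcls[OF Ginv] by (rule conj_lemma[OF Ginv]) simp
    ultimately show ?thesis unfolding psl3_conj_class_def by blast
  qed
  have neq: "P i \<noteq> P j" if ij: "i < 18" "j < 18" "i \<noteq> j" for i j
  proof
    assume "P i = P j"
    then obtain c where c: "c^3 = 1" "M j = sc c (M i)" unfolding P_def using pcls_eqD by blast
    hence Ej: "E j = sc c (E i)" by (simp add: M_def T_sc[symmetric] T_inj)
    have trj: "E j $1$1 + E j $2$2 + E j $3$3 = 1"
      using sing[OF ij(2)] by (simp add: E_def emat_tr[OF t2 wq] emb_def)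
    have tri: "E i $1$1 + E i $2$2 + E i $3$3 = 1"
      using sing[OF ij(1)] by (simp add: E_def emat_tr[OF t2 wq] emb_def)
    have "c = 1" using trj tri unfolding Ej sc_entry by (simp add: distrib_left[symmetric])
    hence "E j = E i" using Ej by (simp add: sc_one)
    moreover obtain a b where "a < 3" "b < 3" "Ks!i!a!b \<noteq> Ks!j!a!b"
    proof -
      have "list_ex (\<lambda>a. list_ex (\<lambda>b. Ks!i!a!b \<noteq> Ks!j!a!b) [0,1,2]) [0,1,2::nat]"
        using tab[OF ij(1,2)] ij(3) by blast
      then obtain a b where ab: "a \<in> set [0,1,2::nat]" "b \<in> set [0,1,2::nat]" "Ks!i!a!b \<noteq> Ks!j!a!b"
        unfolding list_ex_iff by blast
      have "a < 3" "b < 3" using ab(1,2) by auto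
      thus ?thesis using that ab(3) by blast
    qed
    ultimately show False using emat_neq[OF t2 wq] unfolding E_def by metis
  qed
  define R where "R = P ` {..<9}"
  define S where "S = P ` {9..<18}"
  define Y where "Y = R \<union> S"
  have Yeq: "Y = P ` {..<18}"
  proof -
    have "{..<18::nat} = {..<9} \<union> {9..<18}" by auto
    thus ?thesis unfolding Y_def R_def S_def by (simp only: image_Un)
  qed
  have dec: "decomposition pconj ?X Y R S"
    unfolding decomposition_def subrack_def
  proof (intro conjI)
    show "Y \<subseteq> ?X" unfolding Yeq using mem by auto
    show "R \<subseteq> ?X" unfolding R_def using mem by auto
    show "S \<subseteq> ?X" unfolding S_def using mem by auto
    show "\<forall>x\<in>Y. \<forall>y\<in>Y. pconj x y \<in> Y" unfolding Yeq using opM Tbound by auto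
    show "\<forall>x\<in>R. \<forall>y\<in>R. pconj x y \<in> R" unfolding R_def using opM tab by auto
    show "\<forall>x\<in>S. \<forall>y\<in>S. pconj x y \<in> S" unfolding S_def using opM tab by auto
    have "(0::nat) \<in> {..<9}" "(9::nat) \<in> {9..<18}" by simp_all
    thus "R \<noteq> {}" "S \<noteq> {}" unfolding R_def S_def by blast+
    show "R \<inter> S = {}" unfolding R_def S_def using neq by fastforce
    show "Y = R \<union> S" by (simp add: Y_def)
    show "{pconj y r | y r. y \<in> Y \<and> r \<in> R} = R"
    proof (intro set_eqI iffI)
      fix x assume "x \<in> {pconj y r | y r. y \<in> Y \<and> r \<in> R}"
      then obtain i j where "i < 18" "j < 9" "x = pconj (P i) (P j)" unfolding Yeq R_def by auto
      thus "x \<in> R" unfolding R_def using opM tab by auto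
    next
      fix x assume "x \<in> R"
      then obtain j where j: "j < 9" "x = P j" unfolding R_def by auto
      hence "x = pconj (P j) (P j)" using opM sing by auto
      moreover have "P j \<in> Y" "P j \<in> R" using j by (auto simp: Yeq R_def)
      ultimately show "x \<in> {pconj y r | y r. y \<in> Y \<and> r \<in> R}" by blast
    qed
    show "{pconj y r | y r. y \<in> Y \<and> r \<in> S} = S"
    proof (intro set_eqI iffI)
      fix x assume "x \<in> {pconj y r | y r. y \<in> Y \<and> r \<in> S}"
      then obtain i j where "i < 18" "9 \<le> j" "j < 18" "x = pconj (P i) (P j)" unfolding Yeq S_def by auto
      thus "x \<in> S" unfolding S_def using opM tab by auto
    next
      fix x assume "x \<in> S"
      then obtain j where j: "9 \<le> j" "j < 18" "x = P j" unfolding S_def by auto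
      hence "x = pconj (P j) (P j)" using opM sing by auto
      moreover have "P j \<in> Y" "P j \<in> S" using j by (auto simp: Yeq S_def)
      ultimately show "x \<in> {pconj y r | y r. y \<in> Y \<and> r \<in> S}" by blast
    qed
  qed
  have "pconj (P 0) (pconj (P 9) (pconj (P 0) (P 9))) = P 11"
    using opM chk_D by simp
  moreover have "P 11 \<noteq> P 9" by (rule neq) auto
  moreover have "P 0 \<in> R" "P 9 \<in> S" by (auto simp: R_def S_def)
  ultimately show ?thesis unfolding type_D_def using dec by metis
qed

end
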